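(* For every sufficiently large integer $n$ (in particular whenever $2ne^{-n/80}+n^{\sqrt n}2^{-(n-1)}+n^{n/7+1}2^{-n^2/20}<1$) there exists a tournament $F_0$ on $n$ vertices such that: (I) every vertex of $F_0$ has out-degree at most $2n/3$ and in-degree at most $2n/3$; (II) there are no disjoint sets $A_1,A_2\subseteq V(F_0)$ with $|A_1|=|A_2|=\lceil\sqrt n\,\rceil$ such that $(a_1,a_2)$ is an arc of $F_0$ for all $a_1\in A_1$, $a_2\in A_2$; (III) for every $S\subseteq V(F_0)$ with $|S|\ge \frac{2n}{13}-\sqrt n$, the induced sub-tournament $F_0[S]$ contains a directed cycle.
   Context: A tournament is a loopless digraph in which every pair of distinct vertices is joined by exactly one arc. For $S\subseteq V(F_0)$, $F_0[S]$ is the induced sub-digraph on $S$. *)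

theory Defs
  imports Complex_Main
begin

definition tournament :: "'a set \<Rightarrow> ('a \<Rightarrow> 'a \<Rightarrow> bool) \<Rightarrow> bool" where
  "tournament V F \<longleftrightarrow> finite V \<and>
     (\<forall>x y. F x y \<longrightarrow> x \<in> V \<and> y \<in> V) \<and>
     (\<forall>x\<in>V. \<not> F x x) \<and>
     (\<forall>x\<in>V. \<forall>y\<in>V. x \<noteq> y \<longrightarrow> (F x y \<or> F y x) \<and> \<not> (F x y \<and> F y x))"

definition out_degree :: "'a set \<Rightarrow> ('a \<Rightarrow> 'a \<Rightarrow> bool) \<Rightarrow> 'a \<Rightarrow> nat" where
  "out_degree V F x = card {y\<in>V. F x y}"

definition in_degree :: "'a set \<Rightarrow> ('a \<Rightarrow> 'a \<Rightarrow> bool) \<Rightarrow> 'a \<Rightarrow> nat" where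
  "in_degree V F x = card {y\<in>V. F y x}"

definition induced :: "('a \<Rightarrow> 'a \<Rightarrow> bool) \<Rightarrow> 'a set \<Rightarrow> ('a \<Rightarrow> 'a \<Rightarrow> bool)" where
  "induced F S = (\<lambda>x y. F x y \<and> x \<in> S \<and> y \<in> S)"

definition has_dicycle :: "'a set \<Rightarrow> ('a \<Rightarrow> 'a \<Rightarrow> bool) \<Rightarrow> bool" where
  "has_dicycle V F \<longleftrightarrow> (\<exists>xs. xs \<noteq> [] \<and> distinct xs \<and> set xs \<subseteq> V \<and>
     (\<forall>i < length xs. F (xs ! i) (xs ! ((i + 1) mod length xs))))"

end

theory Submission
  imports Defs
begin

lemma exp_k8: "exp (real k / 8) \<le> (8/7::real)^k"
proof -
  have "1 + (-1/8) \<le> exp (-1/8::real)" by (rule exp_ge_add_one_self)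
  hence h: "exp (1/8::real) \<le> 8/7"
    using exp_minus[of "1/8::real"] by (simp add: field_simps)
  have "exp (real k / 8) = exp (1/8) ^ k" using exp_of_nat_mult[of k "1/8::real"] by simp
  also have "\<dots> \<le> (8/7)^k" by (rule power_mono[OF h]) simp
  finally show ?thesis .
qed

lemma n_large:
  fixes n :: nat
  assumes "n \<ge> 1" and "2 * real n * exp (- real n / 80) < 1"
  shows "n \<ge> 481"
proof (rule ccontr)
  assume "\<not> n \<ge> 481"
  hence n480: "n \<le> 480" by (simp add: power_divide divide_le_eq)
  have e: "exp (- real n / 80) * exp (real n / 80) = 1" by (simp add: exp_minus[symmetric] exp_add[symmetric])
  have pos: "exp (real n / 80) > 0" by simp
  have lt: "2 * real n < exp (real n / 80)"
  proof -
    have "(2 * real n * exp (- real n / 80)) * exp (real n / 80) < 1 * exp (real n / 80)"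
      by (rule mult_strict_right_mono[OF assms(2) pos])
    moreover have "2 * real n = (2 * real n * exp (- real n / 80)) * exp (real n / 80)"
      using e by (simp add: mult.assoc)
    ultimately show ?thesis by linarith
  qed
  consider "n \<le> 79" | "80 \<le> n \<and> n \<le> 160" | "160 \<le> n \<and> n \<le> 400" | "400 \<le> n \<and> n \<le> 480"
    using n480 by linarith
  thus False
  proof cases
    case 1
    have "1 + (- real n / 80) \<le> exp (- real n / 80)" by (rule exp_ge_add_one_self)
    hence "2 * real n * (1 - real n / 80) \<le> 2 * real n * exp (- real n / 80)"
      by (intro mult_left_mono) auto
    moreover have "2 * real n * (1 - real n / 80) \<ge> 1"
    proof -
      have a: "real n \<ge> 1" "real n \<le> 79" using assms(1) 1 by auto
      have "(real n - 1) * (79 - real n) \<ge> 0" using a by simp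
      thus ?thesis by (simp add: algebra_simps) 
    qed
    ultimately show False using assms(2) by linarith
  next
    case 2
    have "exp (real n / 80) \<le> exp (real 16 / 8)" using 2 by simp
    also have "\<dots> \<le> (8/7)^16" by (rule exp_k8)
    also have "\<dots> \<le> 160" by (simp add: power_divide divide_le_eq)
    finally show False using lt 2 by simp
  next
    case 3
    have "exp (real n / 80) \<le> exp (real 40 / 8)" using 3 by simp
    also have "\<dots> \<le> (8/7)^40" by (rule exp_k8)
    also have "\<dots> \<le> 320" by (simp add: power_divide divide_le_eq)
    finally show False using lt 3 by simp
  next
    case 4
    have "exp (real n / 80) \<le> exp (real 48 / 8)" using 4 by simp
    also have "\<dots> \<le> (8/7)^48" by (rule exp_k8)
    also have "\<dots> \<le> 800" by (simp add: power_divide divide_le_eq)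
    finally show False using lt 4 by simp
  qed
qed

lemma num1: "n \<ge> 100 \<Longrightarrow> 8 * n^3 * 27^(n-1) < (32::nat)^(n-1)"
proof (induction n rule: dec_induct)
  case base
  then show ?case by simp
next
  case (step m)
  have a: "27 * (m+1)^3 \<le> 32 * m^3" using step(1)
  proof -
    have "100 * (m+1) \<le> 101 * m" using step(1) by simp
    hence "(100 * (m+1))^3 \<le> (101 * m)^3" by (rule power_mono) simp
    hence "100^3 * (m+1)^3 \<le> 101^3 * m^3" by (simp only: power_mult_distrib)
    hence "27 * (100^3 * (m+1)^3) \<le> 27 * (101^3 * m^3)" by simp
    also have "\<dots> \<le> 100^3 * (32 * m^3)" by simp
    finally show ?thesis by simp
  qed
  have "8 * (Suc m)^3 * 27^(Suc m - 1) = 8 * (27 * (m+1)^3) * 27^(m-1)"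
    using step(1) by (cases m) (simp_all add: algebra_simps)
  also have "\<dots> \<le> 8 * (32 * m^3) * 27^(m-1)" using a by simp
  also have "\<dots> = 32 * (8 * m^3 * 27^(m-1))" by simp
  also have "\<dots> < 32 * 32^(m-1)" using step(3) by simp
  also have "\<dots> = 32^(Suc m - 1)" using step(1) by (cases m) simp_all
  finally show ?case .
qed

lemma num2: "s \<ge> 18 \<Longrightarrow> 2 * s^4 \<le> (2::nat)^s"
proof (induction s rule: dec_induct)
  case base
  then show ?case by simp
next
  case (step m)
  have "2 * (Suc m)^4 \<le> 2 * (2 * m^4)"
  proof -
    have "18 * (m+1) \<le> 19 * m" using step(1) by simp
    hence "(18 * (m+1))^4 \<le> (19 * m)^4" by (rule power_mono) simp
    hence "18^4 * (m+1)^4 \<le> 19^4 * m^4" by (simp only: power_mult_distrib)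
    also have "\<dots> \<le> 18^4 * (2 * m^4)" by simp
    finally have "(m+1)^4 \<le> 2 * m^4" by simp
    thus ?thesis by simp
  qed
  also have "\<dots> \<le> 2 * 2^m" using step(3) by simp
  finally show ?case by simp
qed

definition PP :: "nat \<Rightarrow> (nat \<times> nat) set" where "PP n = {(i,j). i<j \<and> j<n}"
definition TF :: "nat \<Rightarrow> (nat \<times> nat) set \<Rightarrow> nat \<Rightarrow> nat \<Rightarrow> bool" where
  "TF n D x y = ((x,y) \<in> D \<or> ((y,x) \<in> PP n \<and> (y,x) \<notin> D))"

lemma finite_PP: "finite (PP n)"
proof -
  have "PP n \<subseteq> {0..<n} \<times> {0..<n}" by (auto simp: PP_def)
  thus ?thesis by (rule finite_subset) simp
qed

lemma count_dep:
  assumes "finite P" "Q \<subseteq> P"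
  shows "card {D\<in>Pow P. \<Phi> (D\<inter>Q)} = card {R\<in>Pow Q. \<Phi> R} * 2^(card P - card Q)"
proof -
  have k: "\<And>a b. a \<subseteq> Q \<Longrightarrow> b \<subseteq> P - Q \<Longrightarrow> (a \<union> b) \<inter> Q = a" by blast
  have "bij_betw (\<lambda>D. (D\<inter>Q, D-Q)) {D\<in>Pow P. \<Phi>(D\<inter>Q)} ({R\<in>Pow Q. \<Phi> R} \<times> Pow(P-Q))"
    by (rule bij_betw_byWitness[where f'="\<lambda>(R,E). R\<union>E"]) (use assms k in auto)
  hence "card {D\<in>Pow P. \<Phi>(D\<inter>Q)} = card ({R\<in>Pow Q. \<Phi> R} \<times> Pow(P-Q))"
    by (rule bij_betw_same_card)
  also have "\<dots> = card {R\<in>Pow Q. \<Phi> R} * 2^(card P - card Q)"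
    using assms by (simp add: card_cartesian_product card_Pow card_Diff_subset finite_subset)
  finally show ?thesis .
qed

lemma sum_pow3: "finite X \<Longrightarrow> (\<Sum>W\<in>Pow X. (2::nat)^card W) = 3^card X"
proof (induction X rule: finite_induct)
  case empty
  then show ?case by simp
next
  case (insert x F)
  have d: "Pow F \<inter> insert x ` Pow F = {}" using insert by auto
  have inj: "inj_on (insert x) (Pow F)"
  proof (rule inj_onI)
    fix a b assume "a \<in> Pow F" "b \<in> Pow F" "insert x a = insert x b"
    moreover have "x \<notin> a" "x \<notin> b" using insert(2) calculation by auto
    ultimately show "a = b" by (metis Diff_insert_absorb)
  qed
  have "(\<Sum>W\<in>Pow (insert x F). (2::nat)^card W) =
        (\<Sum>W\<in>Pow F. 2^card W) + (\<Sum>W\<in>insert x ` Pow F. 2^card W)"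
    unfolding Pow_insert using insert d by (intro sum.union_disjoint) auto
  also have "(\<Sum>W\<in>insert x ` Pow F. (2::nat)^card W) = (\<Sum>W\<in>Pow F. 2^card (insert x W))"
    using inj by (simp add: sum.reindex)
  also have "\<dots> = (\<Sum>W\<in>Pow F. 2 * 2^card W)"
  proof (rule sum.cong)
    fix W assume "W \<in> Pow F"
    hence "finite W" "x \<notin> W" using insert finite_subset by auto
    thus "(2::nat)^card (insert x W) = 2 * 2^card W" by simp
  qed simp
  finally show ?case using insert by (simp add: sum_distrib_left[symmetric])
qed

lemma tail: assumes "finite X" shows "card {W\<in>Pow X. t \<le> card W} * 2^t \<le> (3::nat)^card X"
proof -
  have "card {W\<in>Pow X. t \<le> card W} * 2^t = (\<Sum>W\<in>{W\<in>Pow X. t \<le> card W}. (2::nat)^t)" by simp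
  also have "\<dots> \<le> (\<Sum>W\<in>{W\<in>Pow X. t \<le> card W}. (2::nat)^card W)"
    by (rule sum_mono) (simp add: power_increasing)
  also have "\<dots> \<le> (\<Sum>W\<in>Pow X. (2::nat)^card W)"
    by (rule sum_mono2) (use assms in auto)
  also have "\<dots> = 3^card X" using sum_pow3[OF assms] .
  finally show ?thesis .
qed

lemma topk:
  assumes "finite T" "\<forall>x\<in>T. \<not> G x x" "\<forall>x\<in>T. \<forall>y\<in>T. x \<noteq> y \<longrightarrow> G x y \<or> G y x"
    "\<forall>x\<in>T. \<forall>y\<in>T. \<forall>z\<in>T. G x y \<longrightarrow> G y z \<longrightarrow> G x z"
  shows "k \<le> card T \<Longrightarrow> \<exists>U\<subseteq>T. card U = k \<and> (\<forall>u\<in>U. \<forall>w\<in>T-U. G u w)"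
proof (induction k)
  case 0
  then show ?case by auto
next
  case (Suc k)
  then obtain U where U: "U \<subseteq> T" "card U = k" "\<forall>u\<in>U. \<forall>w\<in>T-U. G u w" by auto
  have fU: "finite U" using U(1) assms(1) finite_subset by auto
  have "card (T - U) > 0" using Suc.prems U fU by (simp add: card_Diff_subset)
  hence ne: "T - U \<noteq> {}" by (metis card.empty less_irrefl)
  have fTU: "finite (T-U)" using assms(1) by simp
  define g where "g x = card {y\<in>T-U. G x y}" for x
  define m where "m = Max (g ` (T-U))"
  have "m \<in> g ` (T-U)" unfolding m_def using ne fTU by (intro Max_in) auto
  then obtain x where x: "x \<in> T-U" "g x = m" by auto
  have mx: "\<forall>y\<in>T-U. g y \<le> g x" using x fTU unfolding m_def by auto
  have beat: "\<forall>w\<in>T-U-{x}. G x w"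
  proof (rule ccontr)
    assume "\<not> (\<forall>w\<in>T-U-{x}. G x w)"
    then obtain w where w: "w \<in> T-U" "w \<noteq> x" "\<not> G x w" by auto
    hence gwx: "G w x" using assms(3) x(1) by blast
    have "{y\<in>T-U. G x y} \<subset> {y\<in>T-U. G w y}"
    proof
      show "{y\<in>T-U. G x y} \<subseteq> {y\<in>T-U. G w y}" using assms(4) gwx w x by blast
      show "{y\<in>T-U. G x y} \<noteq> {y\<in>T-U. G w y}" using gwx x assms(2) by blast
    qed
    hence "g x < g w" unfolding g_def by (rule psubset_card_mono[rotated]) (use assms(1) in simp)
    thus False using mx w by force
  qed
  show ?case
  proof (intro exI conjI)
    show "insert x U \<subseteq> T" using U x by auto
    show "card (insert x U) = Suc k" using U fU x by simp
    show "\<forall>u\<in>insert x U. \<forall>w\<in>T - insert x U. G u w" using U beat by auto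
  qed
qed

lemma tf_flip: "R \<subseteq> PP n \<Longrightarrow> x < n \<Longrightarrow> y < n \<Longrightarrow> x \<noteq> y \<Longrightarrow> TF n R x y \<longleftrightarrow> \<not> TF n R y x"
proof -
  assume R: "R \<subseteq> PP n" and xy: "x < n" "y < n" "x \<noteq> y"
  have a: "(x,y) \<in> R \<Longrightarrow> x < y" and b: "(y,x) \<in> R \<Longrightarrow> y < x"
    using R unfolding PP_def by auto
  show ?thesis unfolding TF_def PP_def using a b xy by auto
qed

lemma out_count:
  fixes n v t :: nat
  assumes v: "v < n" and t: "t = 2*n div 3 + 1"
  shows "card {D\<in>Pow (PP n). 2*n < 3*card {y\<in>{0..<n}. TF n D v y}} * 2^(n-1+t) \<le> 3^(n-1) * 2^card (PP n)"
proof -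
  define V where "V = {0..<n::nat}"
  define Q where "Q = {p\<in>PP n. fst p = v \<or> snd p = v}"
  define \<Phi> where "\<Phi> R = (2*n < 3*card {y\<in>V. TF n R v y})" for R
  define W where "W R = {y\<in>V-{v}. TF n R v y}" for R
  have QP: "Q \<subseteq> PP n" unfolding Q_def by auto
  have eqTF: "TF n D v y = TF n (D\<inter>Q) v y" if "D \<subseteq> PP n" for D y
    using that unfolding TF_def Q_def by auto
  have eqset: "{D\<in>Pow (PP n). 2*n < 3*card {y\<in>{0..<n}. TF n D v y}} = {D\<in>Pow (PP n). \<Phi> (D\<inter>Q)}"
  proof -
    have "\<Phi> (D\<inter>Q) = (2*n < 3*card {y\<in>{0..<n}. TF n D v y})" if "D \<subseteq> PP n" for D
      unfolding \<Phi>_def V_def using eqTF[OF that] by simp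
    thus ?thesis by auto
  qed
  have cnt: "card {D\<in>Pow (PP n). \<Phi> (D\<inter>Q)} = card {R\<in>Pow Q. \<Phi> R} * 2^(card (PP n) - card Q)"
    by (rule count_dep[OF finite_PP QP])
  have WV: "W R = {y\<in>V. TF n R v y}" if "R \<subseteq> PP n" for R
    using that unfolding W_def TF_def PP_def by auto
  have inj: "inj_on W (Pow Q)"
  proof (rule inj_onI)
    fix R1 R2 assume R: "R1 \<in> Pow Q" "R2 \<in> Pow Q" "W R1 = W R2"
    have key: "p \<in> R1 \<longleftrightarrow> p \<in> R2" if p: "p \<in> Q" for p
    proof -
      obtain a b where ab: "p = (a,b)" "a < b" "b < n" "a = v \<or> b = v"
        using p unfolding Q_def PP_def by auto
      show ?thesis
      proof (cases "a = v")
        case True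
        have "(a,b) \<in> R1 \<longleftrightarrow> b \<in> W R1" for R1
          using R True ab unfolding W_def TF_def V_def PP_def by auto
        hence "(a,b) \<in> R1 \<longleftrightarrow> b \<in> W R1" "(a,b) \<in> R2 \<longleftrightarrow> b \<in> W R2" by blast+
        thus ?thesis using R ab by simp
      next
        case False
        hence bv: "b = v" using ab by simp
        have h: "(a,b) \<in> R \<longleftrightarrow> a \<notin> W R" if "R \<subseteq> Q" for R
          using that bv ab unfolding W_def TF_def V_def PP_def Q_def by auto
        thus ?thesis using R ab by auto
      qed
    qed
    show "R1 = R2" using key R(1,2) by auto
  qed
  have img: "W ` {R\<in>Pow Q. \<Phi> R} \<subseteq> {X\<in>Pow (V-{v}). t \<le> card X}"
  proof
    fix X assume "X \<in> W ` {R\<in>Pow Q. \<Phi> R}"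
    then obtain R where R: "\<Phi> R" "X = W R" "R \<subseteq> Q" by auto
    have "2*n < 3*card X" using R WV[of R] QP unfolding \<Phi>_def by simp
    hence "t \<le> card X" using t by linarith
    thus "X \<in> {X\<in>Pow (V-{v}). t \<le> card X}" using R unfolding W_def by auto
  qed
  have c1: "card {R\<in>Pow Q. \<Phi> R} \<le> card {X\<in>Pow (V-{v}). t \<le> card X}"
    by (rule card_inj_on_le[OF inj_on_subset[OF inj] img]) (auto simp: V_def)
  have cV: "card (V - {v}) = n - 1" using v unfolding V_def by simp
  have c2: "card {R\<in>Pow Q. \<Phi> R} * 2^t \<le> 3^(n-1)"
    using le_trans[OF mult_le_mono1[OF c1] tail[of "V-{v}" t]] cV by (simp add: V_def)
  have q1: "n - 1 \<le> card Q"
  proof -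
    have "inj_on (\<lambda>y. (min v y, max v y)) (V-{v})"
      unfolding inj_on_def min_def max_def by auto
    moreover have "(\<lambda>y. (min v y, max v y)) ` (V-{v}) \<subseteq> Q"
      using v unfolding V_def Q_def PP_def min_def max_def by (auto split: if_splits)
    moreover have "finite Q" using finite_subset[OF QP finite_PP] .
    ultimately have "card (V-{v}) \<le> card Q" by (rule card_inj_on_le)
    thus ?thesis using cV by simp
  qed
  have q2: "card Q \<le> card (PP n)" by (rule card_mono[OF finite_PP QP])
  define c where "c = card {R\<in>Pow Q. \<Phi> R}"
  have "card {D\<in>Pow (PP n). 2*n < 3*card {y\<in>{0..<n}. TF n D v y}} * 2^(n-1+t)
        \<le> c * 2^(card (PP n) - card Q) * 2^(card Q + t)"
    unfolding eqset cnt c_def[symmetric] using q1 by (intro mult_le_mono2 power_increasing) auto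
  also have "\<dots> = (c * 2^t) * 2^(card (PP n) - card Q + card Q)"
    by (simp add: power_add)
  also have "\<dots> = (c * 2^t) * 2^card (PP n)" using q2 by simp
  also have "\<dots> \<le> 3^(n-1) * 2^card (PP n)" using c2 unfolding c_def by simp
  finally show ?thesis .
qed

lemma in_count:
  fixes n v t :: nat
  assumes v: "v < n" and t: "t = 2*n div 3 + 1"
  shows "card {D\<in>Pow (PP n). 2*n < 3*card {y\<in>{0..<n}. TF n D y v}} * 2^(n-1+t) \<le> 3^(n-1) * 2^card (PP n)"
proof -
  have flip: "bij_betw (\<lambda>D. PP n - D) {D\<in>Pow (PP n). 2*n < 3*card {y\<in>{0..<n}. TF n D y v}}
      {D\<in>Pow (PP n). 2*n < 3*card {y\<in>{0..<n}. TF n D v y}}"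
  proof (rule bij_betw_byWitness[where f'="\<lambda>D. PP n - D"])
    have e: "{y\<in>{0..<n}. TF n (PP n - D) v y} = {y\<in>{0..<n}. TF n D y v}" if "D \<subseteq> PP n" for D
      using that unfolding TF_def PP_def by auto
    show "(\<lambda>D. PP n - D) ` {D \<in> Pow (PP n). 2 * n < 3 * card {y \<in> {0..<n}. TF n D y v}}
      \<subseteq> {D \<in> Pow (PP n). 2 * n < 3 * card {y \<in> {0..<n}. TF n D v y}}"
      using e by auto
    have e2: "{y\<in>{0..<n}. TF n (PP n - D) y v} = {y\<in>{0..<n}. TF n D v y}" if "D \<subseteq> PP n" for D
      using that unfolding TF_def PP_def by auto
    show "(\<lambda>D. PP n - D) ` {D \<in> Pow (PP n). 2 * n < 3 * card {y \<in> {0..<n}. TF n D v y}}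
      \<subseteq> {D \<in> Pow (PP n). 2 * n < 3 * card {y \<in> {0..<n}. TF n D y v}}"
      using e2 by auto
  qed auto
  show ?thesis using bij_betw_same_card[OF flip] out_count[OF v t] by simp
qed

lemma bip_count:
  fixes n s :: nat
  assumes A: "A1 \<subseteq> {0..<n}" "A2 \<subseteq> {0..<n}" "A1 \<inter> A2 = {}" "card A1 = s" "card A2 = s"
  shows "card {D\<in>Pow (PP n). \<forall>a1\<in>A1. \<forall>a2\<in>A2. TF n D a1 a2} * 2^(s*s) \<le> 2^card (PP n)"
proof -
  define Q where "Q = (\<lambda>(a,b). (min a b, max a b)) ` (A1 \<times> A2)"
  define R0 where "R0 = {(a,b). a\<in>A1 \<and> b\<in>A2 \<and> a<b}"
  have fA: "finite A1" "finite A2" by (rule finite_subset[OF A(1)], simp, rule finite_subset[OF A(2)], simp)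
  have QP: "Q \<subseteq> PP n"
  proof
    fix p assume "p \<in> Q"
    then obtain a b where ab: "a \<in> A1" "b \<in> A2" "p = (min a b, max a b)" unfolding Q_def by auto
    have "a \<noteq> b" "a < n" "b < n" using ab A(1,2,3) by auto
    thus "p \<in> PP n" using ab unfolding PP_def by (auto simp: min_def max_def)
  qed
  have inj: "inj_on (\<lambda>(a,b). (min a b, max a b)) (A1 \<times> A2)"
  proof (rule inj_onI)
    fix p1 p2 assume p: "p1 \<in> A1 \<times> A2" "p2 \<in> A1 \<times> A2"
      "(\<lambda>(a,b). (min a b, max a b)) p1 = (\<lambda>(a,b). (min a b, max a b)) p2"
    obtain a b c d where abcd: "p1 = (a,b)" "p2 = (c,d)" by (cases p1, cases p2) auto
    have m: "a \<in> A1" "b \<in> A2" "c \<in> A1" "d \<in> A2" using p abcd by auto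
    have e: "min a b = min c d" "max a b = max c d" using p(3) abcd by auto
    have ne: "a \<noteq> d" "c \<noteq> b" using m A(3) by auto
    have "a = c \<and> b = d"
    proof (cases "a \<le> b")
      case True
      show ?thesis
      proof (cases "c \<le> d")
        case True thus ?thesis using \<open>a \<le> b\<close> e by (simp add: min_def max_def)
      next
        case False
        hence "a = d" using \<open>a \<le> b\<close> e by (simp add: min_def max_def)
        thus ?thesis using ne by simp
      qed
    next
      case False
      show ?thesis
      proof (cases "c \<le> d")
        case True
        hence "b = c" using \<open>\<not> a \<le> b\<close> e by (simp add: min_def max_def)
        thus ?thesis using ne by simp
      next
        case False thus ?thesis using \<open>\<not> a \<le> b\<close> e by (simp add: min_def max_def)
      qed
    qed
    thus "p1 = p2" using abcd by simp
  qed
  have "card Q = card (A1 \<times> A2)" unfolding Q_def by (rule card_image[OF inj])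
  also have "\<dots> = card A1 * card A2" by (rule card_cartesian_product)
  finally have cQ: "card Q = s * s" using A(4,5) by simp
  have R0Q: "R0 \<subseteq> Q"
  proof
    fix p assume "p \<in> R0"
    then obtain a b where ab: "a \<in> A1" "b \<in> A2" "a < b" "p = (a,b)" unfolding R0_def by auto
    hence "p = (\<lambda>(a,b). (min a b, max a b)) (a,b)" by simp
    thus "p \<in> Q" unfolding Q_def using ab by blast
  qed
  have sub: "{D\<in>Pow (PP n). \<forall>a1\<in>A1. \<forall>a2\<in>A2. TF n D a1 a2} \<subseteq> {D\<in>Pow (PP n). D \<inter> Q = R0}"
  proof
    fix D assume D: "D \<in> {D\<in>Pow (PP n). \<forall>a1\<in>A1. \<forall>a2\<in>A2. TF n D a1 a2}"
    have "D \<inter> Q = R0"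
    proof
      show "D \<inter> Q \<subseteq> R0"
      proof
        fix p assume p: "p \<in> D \<inter> Q"
        then obtain a b where ab: "a \<in> A1" "b \<in> A2" "p = (min a b, max a b)" unfolding Q_def by auto
        have ne: "a \<noteq> b" using ab A(3) by auto
        show "p \<in> R0"
        proof (cases "a < b")
          case True thus ?thesis using ab unfolding R0_def by auto
        next
          case False
          hence "p = (b,a)" "b < a" using ab ne by auto
          moreover have "TF n D a b" using D ab by auto
          ultimately show ?thesis using p D unfolding TF_def PP_def by auto
        qed
      qed
      show "R0 \<subseteq> D \<inter> Q"
      proof
        fix p assume p: "p \<in> R0"
        then obtain a b where ab: "a \<in> A1" "b \<in> A2" "a < b" "p = (a,b)" unfolding R0_def by auto
        have "TF n D a b" using D ab by auto
        hence "(a,b) \<in> D" using ab unfolding TF_def PP_def by auto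
        thus "p \<in> D \<inter> Q" using p R0Q ab by auto
      qed
    qed
    thus "D \<in> {D\<in>Pow (PP n). D \<inter> Q = R0}" using D by auto
  qed
  have c: "card {D\<in>Pow (PP n). D \<inter> Q = R0} = card {R\<in>Pow Q. R = R0} * 2^(card (PP n) - card Q)"
    by (rule count_dep[OF finite_PP QP])
  have c1: "{R\<in>Pow Q. R = R0} = {R0}" using R0Q by auto
  have q2: "card Q \<le> card (PP n)" by (rule card_mono[OF finite_PP QP])
  have "card {D\<in>Pow (PP n). \<forall>a1\<in>A1. \<forall>a2\<in>A2. TF n D a1 a2} \<le> card {D\<in>Pow (PP n). D \<inter> Q = R0}"
    by (rule card_mono[OF _ sub]) (simp add: finite_PP)
  also have "\<dots> = 2^(card (PP n) - s*s)" using c c1 cQ by simp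
  finally have "card {D\<in>Pow (PP n). \<forall>a1\<in>A1. \<forall>a2\<in>A2. TF n D a1 a2} * 2^(s*s) \<le> 2^(card (PP n) - s*s) * 2^(s*s)"
    by simp
  also have "\<dots> = 2^card (PP n)" using q2 cQ by (simp add: power_add[symmetric])
  finally show ?thesis .
qed

lemma num_deg:
  fixes n t :: nat
  assumes n: "n \<ge> 481" and t: "t = 2*n div 3 + 1"
  shows "4*n*3^(n-1) < (2::nat)^(n-1+t)"
proof -
  have p27: "((3::nat)^(n-1))^3 = 27^(n-1)"
  proof -
    have "((3::nat)^(n-1))^3 = 3^((n-1)*3)" by (rule power_mult[symmetric])
    also have "\<dots> = (3^3)^(n-1)" by (metis power_mult mult.commute)
    finally show ?thesis by simp
  qed
  have h: "8 * n^3 * 27^(n-1) < (32::nat)^(n-1)" using num1 n by simp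
  have "(4*n*3^(n-1))^3 = 64 * (n^3 * 27^(n-1))"
    using p27 by (simp add: power_mult_distrib)
  also have "\<dots> < 8 * 32^(n-1)" using h by simp
  also have "(8::nat) * 32^(n-1) = 2^(5*(n-1)+3)"
    by (simp add: power_add power_mult)
  also have "\<dots> \<le> 2^(3*(n-1+t))"
    using t n by (intro power_increasing) (presburger, simp)
  also have "\<dots> = (2^(n-1+t))^3" by (metis power_mult mult.commute)
  finally show ?thesis by (rule power_less_imp_less_base) simp
qed

lemma num_bip:
  fixes n s :: nat
  assumes s: "s \<ge> 22" and ns: "n \<le> s*s"
  shows "2*(n choose s)^2 < (2::nat)^(s*s)"
proof -
  have c: "n choose s \<le> (s*s)^s"
  proof (cases "s \<le> n")
    case True
    have "n choose s \<le> n^s" by (rule binomial_le_pow[OF True])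
    also have "\<dots> \<le> (s*s)^s" by (rule power_mono[OF ns]) simp
    finally show ?thesis .
  next
    case False thus ?thesis by (simp add: binomial_eq_0)
  qed
  have "(n choose s)^2 \<le> ((s*s)^s)^2" by (rule power_mono[OF c]) simp
  also have "\<dots> = (s^4)^s"
    by (simp add: power_mult[symmetric] power_mult_distrib mult.commute power4_eq_xxxx power2_eq_square)
  finally have c2: "(n choose s)^2 \<le> (s^4)^s" .
  have "(2::nat)^1 < 2^s" by (rule power_strict_increasing) (use s in auto)
  hence "2 < (2::nat)^s" by simp
  moreover have "(0::nat) < (s^4)^s" using s by simp
  ultimately have "2 * (s^4)^s < 2^s * (s^4)^s" by simp
  also have "\<dots> = (2*s^4)^s" by (simp add: power_mult_distrib)
  also have "\<dots> \<le> (2^s)^s" by (rule power_mono[OF num2[OF order_trans[OF _ s]]]) simp_all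
  also have "\<dots> = 2^(s*s)" by (simp add: power_mult)
  finally show ?thesis using c2 by linarith
qed

lemma tourn_TF: assumes DP: "D \<subseteq> PP n" shows "tournament {0..<n} (TF n D)"
proof -
  have a: "\<And>x y. (x,y) \<in> D \<Longrightarrow> x < y \<and> y < n" using DP unfolding PP_def by auto
  have 1: "\<forall>x y. TF n D x y \<longrightarrow> x \<in> {0..<n} \<and> y \<in> {0..<n}"
  proof (intro allI impI)
    fix x y assume "TF n D x y"
    hence "(x,y) \<in> D \<or> (y < x \<and> x < n)" unfolding TF_def PP_def by auto
    thus "x \<in> {0..<n} \<and> y \<in> {0..<n}"
    proof
      assume "(x,y) \<in> D" thus ?thesis using a[of x y] by simp
    qed simp
  qed
  have 2: "\<forall>x\<in>{0..<n}. \<not> TF n D x x"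
  proof
    fix x show "\<not> TF n D x x" unfolding TF_def PP_def using a[of x x] by auto
  qed
  have 3: "\<forall>x\<in>{0..<n}. \<forall>y\<in>{0..<n}. x \<noteq> y \<longrightarrow> (TF n D x y \<or> TF n D y x) \<and> \<not> (TF n D x y \<and> TF n D y x)"
  proof (intro ballI impI)
    fix x y assume xy: "x \<in> {0..<n}" "y \<in> {0..<n}" "x \<noteq> y"
    have "TF n D x y \<longleftrightarrow> \<not> TF n D y x" using tf_flip[OF DP, of x y] xy by simp
    thus "(TF n D x y \<or> TF n D y x) \<and> \<not> (TF n D x y \<and> TF n D y x)" by blast
  qed
  have 0: "finite {0..<n}" by simp
  show ?thesis unfolding tournament_def by (intro conjI 0 1 2 3)
qed

lemma acyclic_trans:
  assumes tour: "tournament V F" and SV: "S \<subseteq> V" and nc: "\<not> has_dicycle S (induced F S)"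
  shows "\<forall>x\<in>S. \<forall>y\<in>S. \<forall>z\<in>S. F x y \<longrightarrow> F y z \<longrightarrow> F x z"
proof (intro ballI impI)
  fix x y z assume xyz: "x \<in> S" "y \<in> S" "z \<in> S" "F x y" "F y z"
  have T: "finite V \<and> (\<forall>x y. F x y \<longrightarrow> x \<in> V \<and> y \<in> V) \<and> (\<forall>x\<in>V. \<not> F x x) \<and>
     (\<forall>x\<in>V. \<forall>y\<in>V. x \<noteq> y \<longrightarrow> (F x y \<or> F y x) \<and> \<not> (F x y \<and> F y x))"
    using tour unfolding tournament_def .
  have irr: "\<forall>x\<in>V. \<not> F x x" using T by (elim conjE)
  have tot: "\<forall>x\<in>V. \<forall>y\<in>V. x \<noteq> y \<longrightarrow> (F x y \<or> F y x) \<and> \<not> (F x y \<and> F y x)" using T by (elim conjE)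
  have V: "x \<in> V" "y \<in> V" "z \<in> V" using xyz SV by auto
  have d: "x \<noteq> y" "y \<noteq> z"
  proof -
    show "x \<noteq> y" proof assume "x = y" thus False using irr V(1) xyz(4) by simp qed
    show "y \<noteq> z" proof assume "y = z" thus False using irr V(2) xyz(5) by simp qed
  qed
  have "x \<noteq> z"
  proof
    assume "x = z"
    hence "F y x" using xyz(5) by simp
    moreover have "\<not> (F x y \<and> F y x)" using tot V(1) V(2) d(1) by simp
    ultimately show False using xyz(4) by simp
  qed
  show "F x z"
  proof (rule ccontr)
    assume "\<not> F x z"
    moreover have "F x z \<or> F z x" using tot V(1) V(3) \<open>x \<noteq> z\<close> by simp
    ultimately have zx: "F z x" by simp
    have "has_dicycle S (induced F S)"
      unfolding has_dicycle_def
    proof (intro exI[of _ "[x,y,z]"] conjI)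
      show "\<forall>i<length [x,y,z]. induced F S ([x,y,z] ! i) ([x,y,z] ! ((i + 1) mod length [x,y,z]))"
      proof (intro allI impI)
        fix i assume "i < length [x,y,z]"
        hence "i = 0 \<or> i = 1 \<or> i = 2" by auto
        thus "induced F S ([x,y,z] ! i) ([x,y,z] ! ((i + 1) mod length [x,y,z]))"
          using xyz zx unfolding induced_def by auto
      qed
    qed (use xyz d \<open>x \<noteq> z\<close> in auto)
    thus False using nc by simp
  qed
qed

theorem lemma4p1:
  fixes n :: nat
  assumes "n \<ge> 1"
    and "2 * real n * exp (- real n / 80) + real n powr sqrt (real n) * 2 powr (- (real n - 1))
          + real n powr (real n / 7 + 1) * 2 powr (- (real n ^ 2) / 20) < 1"
  shows "\<exists>(V :: nat set) F. tournament V F \<and> card V = n \<and>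
     (\<forall>x\<in>V. real (out_degree V F x) \<le> 2 * real n / 3 \<and> real (in_degree V F x) \<le> 2 * real n / 3) \<and>
     \<not> (\<exists>A1 A2. A1 \<subseteq> V \<and> A2 \<subseteq> V \<and> A1 \<inter> A2 = {} \<and>
          card A1 = nat \<lceil>sqrt (real n)\<rceil> \<and> card A2 = nat \<lceil>sqrt (real n)\<rceil> \<and>
          (\<forall>a1\<in>A1. \<forall>a2\<in>A2. F a1 a2)) \<and>
     (\<forall>S \<subseteq> V. real (card S) \<ge> 2 * real n / 13 - sqrt (real n) \<longrightarrow> has_dicycle S (induced F S))"
proof -
  have "0 \<le> real n powr sqrt (real n) * 2 powr (- (real n - 1))" by simp
  moreover have "0 \<le> real n powr (real n / 7 + 1) * 2 powr (- (real n ^ 2) / 20)" by simp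
  ultimately have "2 * real n * exp (- real n / 80) < 1" using assms(2) by linarith
  hence n481: "n \<ge> 481" using n_large assms(1) by blast
  define s where "s = nat \<lceil>sqrt (real n)\<rceil>"
  have rs: "real s = of_int \<lceil>sqrt (real n)\<rceil>" unfolding s_def by simp
  have s1: "sqrt (real n) \<le> real s" using rs by simp
  have s2: "real s \<le> sqrt (real n) + 1" using rs by simp
  have "21 < sqrt (real n)" by (rule real_less_rsqrt) (use n481 in simp)
  hence s22: "s \<ge> 22" using s1 by simp
  have ns: "n \<le> s * s"
  proof -
    have "real n = sqrt (real n) * sqrt (real n)" by simp
    also have "\<dots> \<le> real s * real s" using s1 by (intro mult_mono) auto
    finally show ?thesis by (simp flip: of_nat_mult)
  qed
  define V where "V = {0..<n}"
  define t where "t = 2*n div 3 + 1"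
  define N where "N = card (PP n)"
  define \<Omega> where "\<Omega> = Pow (PP n)"
  define Bout where "Bout v = {D\<in>Pow (PP n). 2*n < 3*card {y\<in>{0..<n}. TF n D v y}}" for v
  define Bin where "Bin v = {D\<in>Pow (PP n). 2*n < 3*card {y\<in>{0..<n}. TF n D y v}}" for v
  define Ev where "Ev p = {D\<in>Pow (PP n). \<forall>a1\<in>fst p. \<forall>a2\<in>snd p. TF n D a1 a2}" for p
  define Pairs where "Pairs = {(A1,A2). A1 \<subseteq> V \<and> A2 \<subseteq> V \<and> A1 \<inter> A2 = {} \<and> card A1 = s \<and> card A2 = s}"
  define Deg where "Deg = (\<Union>v\<in>V. Bout v \<union> Bin v)"
  define Bip where "Bip = (\<Union>p\<in>Pairs. Ev p)"
  have "card Deg \<le> (\<Sum>v\<in>V. card (Bout v \<union> Bin v))" unfolding Deg_def V_def by (rule card_UN_le) simp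
  also have "\<dots> \<le> (\<Sum>v\<in>V. card (Bout v) + card (Bin v))" by (rule sum_mono) (rule card_Un_le)
  finally have cD0: "card Deg \<le> (\<Sum>v\<in>V. card (Bout v) + card (Bin v))" .
  have cD: "card Deg * 2^(n-1+t) \<le> (\<Sum>v\<in>V. (card (Bout v) + card (Bin v)) * 2^(n-1+t))"
    using mult_le_mono1[OF cD0] by (simp only: sum_distrib_right)
  also have "\<dots> \<le> (\<Sum>v\<in>V. 2 * (3^(n-1) * 2^N))"
  proof (rule sum_mono)
    fix v assume "v \<in> V"
    hence v: "v < n" unfolding V_def by simp
    have "card (Bout v) * 2^(n-1+t) \<le> 3^(n-1) * 2^N"
      unfolding Bout_def N_def by (rule out_count[OF v t_def])
    moreover have "card (Bin v) * 2^(n-1+t) \<le> 3^(n-1) * 2^N"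
      unfolding Bin_def N_def by (rule in_count[OF v t_def])
    ultimately show "(card (Bout v) + card (Bin v)) * 2^(n-1+t) \<le> 2 * (3^(n-1) * 2^N)"
      by (simp add: add_mult_distrib)
  qed
  also have "\<dots> = n * 2 * 3^(n-1) * 2^N" unfolding V_def by simp
  finally have cD1: "card Deg * 2^(n-1+t) \<le> n * 2 * 3^(n-1) * 2^N" .
  have cD2: "2 * card Deg * 2^(n-1+t) \<le> (4*n*3^(n-1)) * 2^N"
  proof -
    have "2 * card Deg * 2^(n-1+t) = 2 * (card Deg * 2^(n-1+t))" by (simp only: mult.assoc)
    also have "\<dots> \<le> 2 * (n * 2 * 3^(n-1) * 2^N)" using cD1 by (rule mult_le_mono2)
    also have "\<dots> = (4*n*3^(n-1)) * 2^N" by simp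
    finally show ?thesis .
  qed
  also have "\<dots> < 2^(n-1+t) * 2^N"
    using num_deg[OF n481 t_def] by simp
  finally have degS: "2 * card Deg < 2^N" by simp
  have fPairs: "finite Pairs"
  proof -
    have "Pairs \<subseteq> Pow V \<times> Pow V" unfolding Pairs_def by auto
    thus ?thesis by (rule finite_subset) (simp add: V_def)
  qed
  have cPairs: "card Pairs \<le> (n choose s)^2"
  proof -
    define K where "K = {A. A \<subseteq> V \<and> card A = s}"
    have "Pairs \<subseteq> K \<times> K" unfolding Pairs_def K_def by auto
    moreover have "finite K" unfolding K_def V_def by simp
    ultimately have "card Pairs \<le> card (K \<times> K)" by (intro card_mono) auto
    also have "\<dots> = (n choose s)^2" unfolding K_def card_cartesian_product
      using n_subsets[of V s] by (simp add: V_def power2_eq_square)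
    finally show ?thesis .
  qed
  have "card Bip \<le> (\<Sum>p\<in>Pairs. card (Ev p))" unfolding Bip_def by (rule card_UN_le[OF fPairs])
  hence "card Bip * 2^(s*s) \<le> (\<Sum>p\<in>Pairs. card (Ev p)) * 2^(s*s)"
    by (rule mult_le_mono1)
  also have "\<dots> = (\<Sum>p\<in>Pairs. card (Ev p) * 2^(s*s))" by (rule sum_distrib_right)
  also have "\<dots> \<le> (\<Sum>p\<in>Pairs. 2^N)"
  proof (rule sum_mono)
    fix p assume "p \<in> Pairs"
    then obtain A1 A2 where p: "p = (A1,A2)" "A1 \<subseteq> {0..<n}" "A2 \<subseteq> {0..<n}" "A1 \<inter> A2 = {}" "card A1 = s" "card A2 = s"
      unfolding Pairs_def V_def by auto
    show "card (Ev p) * 2^(s*s) \<le> 2^N"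
      unfolding Ev_def N_def p(1) fst_conv snd_conv by (rule bip_count[OF p(2-6)])
  qed
  also have "\<dots> = card Pairs * 2^N" by simp
  also have "\<dots> \<le> (n choose s)^2 * 2^N" using cPairs by simp
  finally have "2 * card Bip * 2^(s*s) \<le> (2 * (n choose s)^2) * 2^N" by simp
  also have "\<dots> < 2^(s*s) * 2^N" using num_bip[OF s22 ns] by simp
  finally have bipS: "2 * card Bip < 2^N" by simp
  have "card (Deg \<union> Bip) < card \<Omega>"
  proof -
    have "card (Deg \<union> Bip) \<le> card Deg + card Bip" by (rule card_Un_le)
    also have "\<dots> < 2^N" using degS bipS by linarith
    also have "\<dots> = card \<Omega>" unfolding \<Omega>_def N_def by (simp add: card_Pow finite_PP)
    finally show ?thesis .
  qed
  moreover have sub: "Deg \<union> Bip \<subseteq> \<Omega>"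
    unfolding Deg_def Bip_def Bout_def Bin_def Ev_def \<Omega>_def by auto
  ultimately have "\<not> \<Omega> \<subseteq> Deg \<union> Bip"
  proof (intro notI)
    assume lt: "card (Deg \<union> Bip) < card \<Omega>" and "Deg \<union> Bip \<subseteq> \<Omega>" and "\<Omega> \<subseteq> Deg \<union> Bip"
    hence "Deg \<union> Bip = \<Omega>" by blast
    thus False using lt by simp
  qed
  then obtain D where D: "D \<in> \<Omega>" "D \<notin> Deg" "D \<notin> Bip" by auto
  have DP: "D \<subseteq> PP n" using D unfolding \<Omega>_def by auto
  let ?F = "TF n D"
  have tour: "tournament V ?F" unfolding V_def by (rule tourn_TF[OF DP])
  have deg: "\<forall>x\<in>V. real (out_degree V ?F x) \<le> 2 * real n / 3 \<and> real (in_degree V ?F x) \<le> 2 * real n / 3"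
  proof
    fix x assume x: "x \<in> V"
    have "D \<notin> Bout x" "D \<notin> Bin x" using D(2) x unfolding Deg_def by auto
    hence "\<not> 2*n < 3*out_degree V ?F x" "\<not> 2*n < 3*in_degree V ?F x"
      using DP unfolding Bout_def Bin_def out_degree_def in_degree_def V_def by auto
    hence "3 * real (out_degree V ?F x) \<le> 2 * real n" "3 * real (in_degree V ?F x) \<le> 2 * real n"
      by (simp_all flip: of_nat_mult)
    thus "real (out_degree V ?F x) \<le> 2 * real n / 3 \<and> real (in_degree V ?F x) \<le> 2 * real n / 3"
      by simp
  qed
  have nobip: "\<not> (\<exists>A1 A2. A1 \<subseteq> V \<and> A2 \<subseteq> V \<and> A1 \<inter> A2 = {} \<and>
          card A1 = s \<and> card A2 = s \<and> (\<forall>a1\<in>A1. \<forall>a2\<in>A2. ?F a1 a2))"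
  proof
    assume "\<exists>A1 A2. A1 \<subseteq> V \<and> A2 \<subseteq> V \<and> A1 \<inter> A2 = {} \<and>
          card A1 = s \<and> card A2 = s \<and> (\<forall>a1\<in>A1. \<forall>a2\<in>A2. ?F a1 a2)"
    then obtain A1 A2 where A: "A1 \<subseteq> V" "A2 \<subseteq> V" "A1 \<inter> A2 = {}" "card A1 = s" "card A2 = s"
      "\<forall>a1\<in>A1. \<forall>a2\<in>A2. ?F a1 a2" by blast
    have "(A1,A2) \<in> Pairs" using A unfolding Pairs_def by auto
    moreover have "D \<in> Ev (A1,A2)" using A DP unfolding Ev_def by auto
    ultimately have "D \<in> Bip" unfolding Bip_def by auto
    thus False using D by simp
  qed
  have cyc: "\<forall>S \<subseteq> V. real (card S) \<ge> 2 * real n / 13 - sqrt (real n) \<longrightarrow> has_dicycle S (induced ?F S)"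
  proof (intro allI impI)
    fix S assume SV: "S \<subseteq> V" and cS: "real (card S) \<ge> 2 * real n / 13 - sqrt (real n)"
    have big: "2 * real n / 13 - sqrt (real n) \<ge> 2 * sqrt (real n) + 2"
    proof -
      have r21: "sqrt (real n) \<ge> 21" using \<open>21 < sqrt (real n)\<close> by simp
      have e: "sqrt (real n) * sqrt (real n) = real n" by simp
      have h: "sqrt (real n) * (2 * sqrt (real n) - 39) \<ge> 21 * 3"
        using r21 by (intro mult_mono) auto
      have "sqrt (real n) * (2 * sqrt (real n) - 39) = 2 * (sqrt (real n) * sqrt (real n)) - 39 * sqrt (real n)"
        by (simp add: algebra_simps)
      thus ?thesis using e h by linarith
    qed
    have card2s: "2 * s \<le> card S"
    proof -
      have "real (2*s) \<le> real (card S)" using big cS s2 by simp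
      thus ?thesis by (simp only: of_nat_le_iff)
    qed
    show "has_dicycle S (induced ?F S)"
    proof (rule ccontr)
      assume nc: "\<not> has_dicycle S (induced ?F S)"
      have trS: "\<forall>x\<in>S. \<forall>y\<in>S. \<forall>z\<in>S. ?F x y \<longrightarrow> ?F y z \<longrightarrow> ?F x z"
        by (rule acyclic_trans[OF tour SV nc])
      have fS: "finite S" using SV unfolding V_def by (rule finite_subset) simp
      have irr: "\<forall>x\<in>S. \<not> ?F x x" and tot: "\<forall>x\<in>S. \<forall>y\<in>S. x \<noteq> y \<longrightarrow> ?F x y \<or> ?F y x"
        using tour SV unfolding tournament_def by blast+
      obtain U where U: "U \<subseteq> S" "card U = s" "\<forall>u\<in>U. \<forall>w\<in>S-U. ?F u w"
        using topk[OF fS irr tot trS, of s] card2s by auto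
      have "card (S - U) \<ge> s" using U fS card2s by (simp add: card_Diff_subset finite_subset)
      then obtain A2 where A2: "A2 \<subseteq> S - U" "card A2 = s"
        using obtain_subset_with_card_n by metis
      have "U \<subseteq> V \<and> A2 \<subseteq> V \<and> U \<inter> A2 = {} \<and> card U = s \<and> card A2 = s \<and> (\<forall>a1\<in>U. \<forall>a2\<in>A2. ?F a1 a2)"
        using U A2 SV by auto
      thus False using nobip by blast
    qed
  qed
  show ?thesis
    using tour deg nobip cyc unfolding s_def[symmetric]
    by (intro exI[of _ V] exI[of _ ?F]) (simp add: V_def)
qed

end
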